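(* Let $\mathbf Q$, $(Z_n)$ be as in the context. For all $k\ge0$ and $n\ge1$, $\mathbf Q[Z_1\le k\mid Z_n=0]\ge\mathbf Q[Z_1\le k]$. In particular, $E_{\mathbf Q}[Z_i\mid Z_n=0]\le\mathbf f'(q)^i$ for all $i\ge0$ and $n\ge1$.
   Context: $(p_k)_{k\ge0}$ is a probability distribution on $\{0,1,\dots\}$ with generating function $\mathbf f$, $p_0>0$ and $\mathbf f'(1)\in(1,\infty)$; $q\in(0,1)$ is its extinction probability ($\mathbf f(q)=q$). $\mathbf Q$ is the law of a Galton–Watson tree with offspring distribution $q_k=p_kq^{k-1}$, $k\ge0$, which has mean $\mathbf f'(q)<1$; $Z_n$ denotes the number of vertices in generation $n$ ($Z_0=1$). *)

theory Defs
  imports "HOL-Probability.Probability"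
begin

definition gen :: "(nat \<Rightarrow> real) \<Rightarrow> real \<Rightarrow> real" where
  "gen p s = (\<Sum>k. p k * s ^ k)"

text \<open>The offspring law q_k = p_k q^(k-1) (written p_k q^k / q to avoid nat subtraction).\<close>
definition offspring_pmf :: "(nat \<Rightarrow> real) \<Rightarrow> real \<Rightarrow> nat pmf" where
  "offspring_pmf p q = embed_pmf (\<lambda>k. p k * q ^ k / q)"

fun sum_iid :: "nat pmf \<Rightarrow> nat \<Rightarrow> nat pmf" where
  "sum_iid d 0 = return_pmf 0"
| "sum_iid d (Suc j) = bind_pmf (sum_iid d j) (\<lambda>s. map_pmf (\<lambda>x. s + x) d)"

text \<open>Joint law of the generation sizes [Z_0, Z_1, ..., Z_n] of a Galton--Watson
  tree with offspring law d (Z_0 = 1).\<close>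
fun gw_gens :: "nat pmf \<Rightarrow> nat \<Rightarrow> nat list pmf" where
  "gw_gens d 0 = return_pmf [1]"
| "gw_gens d (Suc n) =
     bind_pmf (gw_gens d n) (\<lambda>zs. map_pmf (\<lambda>m. zs @ [m]) (sum_iid d (last zs)))"

end

theory Submission
  imports Defs
begin


fun iterK :: "nat pmf \<Rightarrow> nat \<Rightarrow> nat \<Rightarrow> nat pmf" where
  "iterK d 0 z = return_pmf z"
| "iterK d (Suc t) z = bind_pmf (sum_iid d z) (iterK d t)"

definition mu :: "nat pmf \<Rightarrow> nat \<Rightarrow> nat pmf" where
  "mu d i = map_pmf (\<lambda>zs. zs ! i) (gw_gens d i)"

lemma iterK_0': "iterK d 0 = return_pmf"
  by (rule ext) simp

lemma iterK_Suc': "iterK d (Suc t) z = bind_pmf (iterK d t z) (sum_iid d)"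
proof (induction t arbitrary: z)
  case 0
  show ?case by (simp only: iterK.simps(2) iterK_0' bind_return_pmf') (simp add: bind_return_pmf)
next
  case (Suc t)
  have e: "iterK d (Suc t) = (\<lambda>y. bind_pmf (iterK d t y) (sum_iid d))"
    using Suc by (intro ext) simp
  have "iterK d (Suc (Suc t)) z = bind_pmf (sum_iid d z) (\<lambda>y. bind_pmf (iterK d t y) (sum_iid d))"
    by (subst iterK.simps(2), subst e) (rule refl)
  also have "\<dots> = bind_pmf (bind_pmf (sum_iid d z) (iterK d t)) (sum_iid d)"
    by (simp add: bind_assoc_pmf)
  finally show ?case by simp
qed

lemma iterK_0: "iterK d t 0 = return_pmf 0"
  by (induction t) (simp_all add: bind_return_pmf)

lemma last_len: "length x = Suc n \<Longrightarrow> last x = x ! n"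
  by (cases x rule: rev_cases) auto

lemma gw_length: "zs \<in> set_pmf (gw_gens d n) \<Longrightarrow> length zs = Suc n"
  by (induction n arbitrary: zs) auto

lemma gw_joint:
  assumes "i \<le> n"
  shows "map_pmf (\<lambda>zs. (zs ! i, zs ! n)) (gw_gens d n) =
         bind_pmf (mu d i) (\<lambda>z. map_pmf (Pair z) (iterK d (n - i) z))"
  using assms
proof (induction n rule: dec_induct)
  case base
  show ?case
    by (simp add: mu_def bind_map_pmf map_pmf_def bind_return_pmf bind_assoc_pmf)
next
  case (step n)
  have "map_pmf (\<lambda>zs. (zs ! i, zs ! Suc n)) (gw_gens d (Suc n)) =
        bind_pmf (gw_gens d n) (\<lambda>zs. map_pmf (\<lambda>m. (zs ! i, m)) (sum_iid d (zs ! n)))"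
    apply (simp add: map_bind_pmf map_pmf_comp)
    apply (rule bind_pmf_cong, simp)
    apply (rule map_pmf_cong)
    using step(1) by (auto dest!: gw_length simp: nth_append last_len)
  also have "\<dots> = bind_pmf (map_pmf (\<lambda>zs. (zs ! i, zs ! n)) (gw_gens d n))
                     (\<lambda>(a,b). map_pmf (Pair a) (sum_iid d b))"
    by (simp add: bind_map_pmf)
  also have "\<dots> = bind_pmf (mu d i) (\<lambda>z. bind_pmf (map_pmf (Pair z) (iterK d (n - i) z))
                     (\<lambda>(a,b). map_pmf (Pair a) (sum_iid d b)))"
    by (simp only: step.IH bind_assoc_pmf)
  also have "\<dots> = bind_pmf (mu d i) (\<lambda>z. map_pmf (Pair z) (bind_pmf (iterK d (n - i) z) (sum_iid d)))"
    by (simp add: bind_map_pmf map_bind_pmf)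
  also have "\<dots> = bind_pmf (mu d i) (\<lambda>z. map_pmf (Pair z) (iterK d (Suc n - i) z))"
    using step(1) by (simp only: Suc_diff_le iterK_Suc')
  finally show ?case .
qed

lemma mu_0: "mu d 0 = return_pmf 1"
  by (simp add: mu_def)

lemma mu_Suc: "mu d (Suc i) = bind_pmf (mu d i) (sum_iid d)"
proof -
  have "mu d (Suc i) = bind_pmf (gw_gens d i) (\<lambda>zs. sum_iid d (zs ! i))"
    unfolding mu_def
    apply (simp add: map_bind_pmf map_pmf_comp)
    apply (rule bind_pmf_cong, simp)
    by (auto dest!: gw_length simp: last_len nth_append map_pmf_ident)
  also have "\<dots> = bind_pmf (mu d i) (sum_iid d)"
    by (simp add: mu_def bind_map_pmf)
  finally show ?thesis .
qed




lemma nn_int_add_const_pmf: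
  "(\<integral>\<^sup>+x. c + f x \<partial>measure_pmf M) = c + (\<integral>\<^sup>+x. f x \<partial>measure_pmf M)"
  by (subst nn_integral_add) (auto simp: measure_pmf.emeasure_space_1)

lemma sum_iid_mean:
  "(\<integral>\<^sup>+y. ennreal (real y) \<partial>sum_iid d z) = of_nat z * (\<integral>\<^sup>+x. ennreal (real x) \<partial>d)"
proof (induction z)
  case 0
  then show ?case by simp
next
  case (Suc z)
  have "(\<integral>\<^sup>+y. ennreal (real y) \<partial>sum_iid d (Suc z)) =
        (\<integral>\<^sup>+s. (\<integral>\<^sup>+x. ennreal (real s) + ennreal (real x) \<partial>d) \<partial>sum_iid d z)"
    by (simp add: ennreal_plus[symmetric] del: ennreal_plus)
  also have "\<dots> = (\<integral>\<^sup>+s. ennreal (real s) + (\<integral>\<^sup>+x. ennreal (real x) \<partial>d) \<partial>sum_iid d z)"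
    by (simp add: nn_int_add_const_pmf)
  also have "\<dots> = (\<integral>\<^sup>+s. ennreal (real s) \<partial>sum_iid d z) + (\<integral>\<^sup>+x. ennreal (real x) \<partial>d)"
    by (subst nn_integral_add) (auto simp: measure_pmf.emeasure_space_1)
  also have "\<dots> = of_nat (Suc z) * (\<integral>\<^sup>+x. ennreal (real x) \<partial>d)"
    using Suc by (simp add: distrib_right)
  finally show ?case .
qed

lemma mu_mean:
  "(\<integral>\<^sup>+y. ennreal (real y) \<partial>mu d i) = (\<integral>\<^sup>+x. ennreal (real x) \<partial>d) ^ i"
proof (induction i)
  case 0
  then show ?case by (simp add: mu_0)
next
  case (Suc i)
  have "(\<integral>\<^sup>+y. ennreal (real y) \<partial>mu d (Suc i)) =
     (\<integral>\<^sup>+z. ennreal (real z) * (\<integral>\<^sup>+x. ennreal (real x) \<partial>d) \<partial>mu d i)"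
    by (simp add: mu_Suc sum_iid_mean ennreal_of_nat_eq_real_of_nat)
  also have "\<dots> = (\<integral>\<^sup>+x. ennreal (real x) \<partial>d) ^ Suc i"
    by (subst nn_integral_multc) (auto simp: Suc mult.commute)
  finally show ?case .
qed

lemma antimono_step:
  fixes g :: "nat \<Rightarrow> ennreal"
  assumes g: "\<And>a b. a \<le> b \<Longrightarrow> g b \<le> g a"
  shows "(\<integral>\<^sup>+y. g y \<partial>sum_iid d (Suc z)) \<le> (\<integral>\<^sup>+y. g y \<partial>sum_iid d z)"
proof -
  have "(\<integral>\<^sup>+y. g y \<partial>sum_iid d (Suc z)) = (\<integral>\<^sup>+s. (\<integral>\<^sup>+x. g (s + x) \<partial>d) \<partial>sum_iid d z)"
    by simp
  also have "\<dots> \<le> (\<integral>\<^sup>+s. (\<integral>\<^sup>+x. g s \<partial>d) \<partial>sum_iid d z)"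
    by (intro nn_integral_mono g) simp
  also have "\<dots> = (\<integral>\<^sup>+y. g y \<partial>sum_iid d z)"
    by (simp add: measure_pmf.emeasure_space_1)
  finally show ?thesis .
qed

lemma antimono_gen:
  fixes g :: "nat \<Rightarrow> ennreal"
  assumes g: "\<And>a b. a \<le> b \<Longrightarrow> g b \<le> g a" and "z \<le> z'"
  shows "(\<integral>\<^sup>+y. g y \<partial>sum_iid d z') \<le> (\<integral>\<^sup>+y. g y \<partial>sum_iid d z)"
  using assms(2)
proof (induction z' rule: dec_induct)
  case base then show ?case by simp
next
  case (step n)
  then show ?case using antimono_step[OF g, where d=d and z=n] by (meson order_trans)
qed

lemma u_antimono:
  "a \<le> b \<Longrightarrow> ennreal (pmf (iterK d t b) 0) \<le> ennreal (pmf (iterK d t a) 0)"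
proof (induction t arbitrary: a b)
  case 0
  then show ?case by (auto split: split_indicator)
next
  case (Suc t)
  show ?case
    using antimono_gen[of "\<lambda>y. ennreal (pmf (iterK d t y) 0)", OF Suc.IH Suc.prems]
    by (simp add: ennreal_pmf_bind)
qed

lemma nn_int_const_add_pmf:
  "(\<integral>\<^sup>+x. f x + c \<partial>measure_pmf M) = (\<integral>\<^sup>+x. f x \<partial>measure_pmf M) + c"
  using nn_int_add_const_pmf[where c=c and f=f and M=M] by (simp add: add.commute)

lemma cheb_aux1:
  fixes f g :: "nat \<Rightarrow> ennreal" and M :: "nat pmf"
  shows "(\<integral>\<^sup>+x. (\<integral>\<^sup>+y. f x * g x + f y * g y \<partial>M) \<partial>M) = 2 * (\<integral>\<^sup>+x. f x * g x \<partial>measure_pmf M)"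
proof -
  let ?I = "(\<integral>\<^sup>+x. f x * g x \<partial>measure_pmf M)"
  have "(\<integral>\<^sup>+x. (\<integral>\<^sup>+y. f x * g x + f y * g y \<partial>M) \<partial>M) = (\<integral>\<^sup>+x. f x * g x + ?I \<partial>M)"
    by (rule nn_integral_cong) (rule nn_int_add_const_pmf)
  also have "\<dots> = ?I + ?I" by (rule nn_int_const_add_pmf)
  finally show ?thesis by (simp add: mult_2)
qed

lemma cheb_aux2:
  fixes f g :: "nat \<Rightarrow> ennreal" and M :: "nat pmf"
  shows "(\<integral>\<^sup>+x. (\<integral>\<^sup>+y. f x * g y + f y * g x \<partial>M) \<partial>M) = 2 * ((\<integral>\<^sup>+x. f x \<partial>M) * (\<integral>\<^sup>+x. g x \<partial>M))"
proof -
  let ?F = "(\<integral>\<^sup>+x. f x \<partial>M)" and ?G = "(\<integral>\<^sup>+x. g x \<partial>M)"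
  have "(\<integral>\<^sup>+x. (\<integral>\<^sup>+y. f x * g y + f y * g x \<partial>M) \<partial>M) = (\<integral>\<^sup>+x. f x * ?G + ?F * g x \<partial>M)"
    by (rule nn_integral_cong) (simp add: nn_integral_add nn_integral_cmult nn_integral_multc)
  also have "\<dots> = ?F * ?G + ?F * ?G"
    by (simp add: nn_integral_add nn_integral_cmult nn_integral_multc)
  finally show ?thesis by (simp add: mult_2)
qed

lemma cheb_opp:
  fixes f g :: "nat \<Rightarrow> ennreal" and M :: "nat pmf"
  assumes h: "\<And>x y. f x * g x + f y * g y \<le> f x * g y + f y * g x"
  shows "(\<integral>\<^sup>+x. f x * g x \<partial>measure_pmf M) \<le> (\<integral>\<^sup>+x. f x \<partial>M) * (\<integral>\<^sup>+x. g x \<partial>M)"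
proof -
  have "2 * (\<integral>\<^sup>+x. f x * g x \<partial>measure_pmf M) \<le> 2 * ((\<integral>\<^sup>+x. f x \<partial>M) * (\<integral>\<^sup>+x. g x \<partial>M))"
    unfolding cheb_aux1[symmetric] cheb_aux2[symmetric]
    by (intro nn_integral_mono h)
  then show ?thesis
    by (subst (asm) ennreal_mult_le_mult_iff) auto
qed

lemma cheb_same:
  fixes f g :: "nat \<Rightarrow> ennreal" and M :: "nat pmf"
  assumes h: "\<And>x y. f x * g y + f y * g x \<le> f x * g x + f y * g y"
  shows "(\<integral>\<^sup>+x. f x \<partial>M) * (\<integral>\<^sup>+x. g x \<partial>M) \<le> (\<integral>\<^sup>+x. f x * g x \<partial>measure_pmf M)"
proof -
  have "2 * ((\<integral>\<^sup>+x. f x \<partial>M) * (\<integral>\<^sup>+x. g x \<partial>M)) \<le> 2 * (\<integral>\<^sup>+x. f x * g x \<partial>measure_pmf M)"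
    unfolding cheb_aux1[symmetric] cheb_aux2[symmetric]
    by (intro nn_integral_mono h)
  then show ?thesis
    by (subst (asm) ennreal_mult_le_mult_iff) auto
qed

lemma joint_integral:
  assumes "i \<le> n"
  shows "(\<integral>\<^sup>+zs. F (zs ! i) (zs ! n) \<partial>gw_gens d n) =
         (\<integral>\<^sup>+z. (\<integral>\<^sup>+w. F z w \<partial>iterK d (n - i) z) \<partial>mu d i)"
proof -
  have "(\<integral>\<^sup>+zs. F (zs ! i) (zs ! n) \<partial>gw_gens d n) =
        (\<integral>\<^sup>+p. case_prod F p \<partial>map_pmf (\<lambda>zs. (zs ! i, zs ! n)) (gw_gens d n))"
    by simp
  also have "\<dots> = (\<integral>\<^sup>+z. (\<integral>\<^sup>+w. F z w \<partial>iterK d (n - i) z) \<partial>mu d i)"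
    by (simp add: gw_joint[OF assms])
  finally show ?thesis .
qed




lemma offspring_facts:
  fixes p :: "nat \<Rightarrow> real" and q :: real
  assumes nonneg: "\<forall>k. p k \<ge> 0"
    and prob: "p sums 1"
    and mean_fin: "summable (\<lambda>k. real k * p k)"
    and q_range: "0 < q" "q < 1"
    and q_fix: "gen p q = q"
  shows "\<And>k. pmf (offspring_pmf p q) k = p k * q ^ k / q"
    and "(\<integral>\<^sup>+x. ennreal (real x) \<partial>offspring_pmf p q) = ennreal (deriv (gen p) q)"
    and "deriv (gen p) q \<ge> 0"
proof -
  have sp: "summable p" using prob by (rule sums_summable)
  have nn: "\<And>k. 0 \<le> p k * q ^ k / q" using nonneg q_range by simp
  have s1: "summable (\<lambda>k. p k * q ^ k)"
    by (rule summable_comparison_test'[OF sp, of 0])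
       (use nonneg q_range in \<open>auto intro!: mult_left_le simp: power_le_one\<close>)
  have s2: "summable (\<lambda>k. p k * q ^ k / q)" using s1 by (rule summable_divide)
  have "(\<Sum>k. p k * q ^ k / q) = gen p q / q"
    unfolding gen_def using s1 by (simp add: suminf_divide)
  also have "\<dots> = 1" using q_fix q_range by simp
  finally have sum1: "(\<Sum>k. p k * q ^ k / q) = 1" .
  have int1: "(\<integral>\<^sup>+x. ennreal (p x * q ^ x / q) \<partial>count_space UNIV) = 1"
    by (simp add: nn_integral_count_space_nat suminf_ennreal2[OF nn s2] sum1)
  show pm: "\<And>k. pmf (offspring_pmf p q) k = p k * q ^ k / q"
    unfolding offspring_pmf_def by (rule pmf_embed_pmf[OF nn int1])
  define a where "a k = real k * p k * q ^ k" for k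
  have anz: "\<And>k. 0 \<le> a k" using nonneg q_range by (simp add: a_def)
  have sa: "summable a"
    by (rule summable_comparison_test'[OF mean_fin, of 0])
       (use nonneg q_range in \<open>auto simp: a_def intro!: mult_left_le power_le_one\<close>)
  have der: "DERIV (gen p) q :> (\<Sum>n. diffs p n * q ^ n)"
  proof -
    have "DERIV (\<lambda>x. \<Sum>n. p n * x ^ n) q :> (\<Sum>n. diffs p n * q ^ n)"
      by (rule termdiffs_strong[where K=1]) (use sp q_range in auto)
    moreover have "(\<lambda>x. \<Sum>n. p n * x ^ n) = gen p" by (rule ext) (simp add: gen_def)
    ultimately show ?thesis by simp
  qed
  have "(\<lambda>n. a (Suc n)) sums (suminf a - a 0)"
    using sa by (simp add: suminf_split_head summable_Suc_iff sums_iff)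
  hence "(\<lambda>n. a (Suc n) / q) sums ((suminf a - a 0) / q)"
    by (rule sums_divide)
  hence "(\<lambda>n. a (Suc n) / q) sums (suminf a / q)"
    by (simp add: a_def)
  moreover have "\<And>n. a (Suc n) / q = diffs p n * q ^ n"
    using q_range by (simp add: a_def diffs_def)
  ultimately have "(\<lambda>n. diffs p n * q ^ n) sums (suminf a / q)" by simp
  hence dv: "deriv (gen p) q = suminf a / q"
    using DERIV_imp_deriv[OF der] by (simp add: sums_iff)
  show "deriv (gen p) q \<ge> 0" unfolding dv using q_range sa anz by (simp add: suminf_nonneg)
  have "(\<integral>\<^sup>+x. ennreal (real x) \<partial>offspring_pmf p q) =
        (\<integral>\<^sup>+x. ennreal (a x / q) \<partial>count_space UNIV)"
    unfolding nn_integral_measure_pmf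
    by (rule nn_integral_cong) (use nonneg q_range in \<open>simp add: pm a_def ennreal_mult''[symmetric]\<close>)
  also have "\<dots> = ennreal (\<Sum>k. a k / q)"
    using anz q_range summable_divide[OF sa, of q]
    by (simp add: nn_integral_count_space_nat suminf_ennreal2)
  also have "\<dots> = ennreal (deriv (gen p) q)"
    unfolding dv using sa by (simp add: suminf_divide)
  finally show "(\<integral>\<^sup>+x. ennreal (real x) \<partial>offspring_pmf p q) = ennreal (deriv (gen p) q)" .
qed




lemma zero_in_sum_iid: "0 \<in> set_pmf d \<Longrightarrow> 0 \<in> set_pmf (sum_iid d z)"
  by (induction z) force+

lemma gw_pos:
  assumes "0 \<in> set_pmf d" "1 \<le> n"
  shows "\<exists>zs\<in>set_pmf (gw_gens d n). zs ! n = 0"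
proof -
  have *: "\<exists>zs\<in>set_pmf (gw_gens d (Suc m)). last zs = 0" for m
  proof (induction m)
    case 0
    have "[1, 0] \<in> set_pmf (gw_gens d 1)"
      using zero_in_sum_iid[OF assms(1), of 1] by auto
    then show ?case by force
  next
    case (Suc m)
    then obtain zs where "zs \<in> set_pmf (gw_gens d (Suc m))" "last zs = 0" by blast
    then have "zs @ [0] \<in> set_pmf (gw_gens d (Suc (Suc m)))"
      by (simp del: gw_gens.simps(2) add: gw_gens.simps(2)[of d "Suc m"]) force
    then show ?case by force
  qed
  obtain m where nm: "n = Suc m" using assms(2) by (cases n) auto
  then obtain zs where zs: "zs \<in> set_pmf (gw_gens d n)" "last zs = 0"
    using * by blast
  have "zs ! n = 0" using zs last_len[OF gw_length[OF zs(1)]] by simp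
  then show ?thesis using zs(1) by blast
qed

lemma nn_integral_cond_pmf:
  assumes "set_pmf p \<inter> s \<noteq> {}"
  shows "(\<integral>\<^sup>+x. f x \<partial>cond_pmf p s) = (\<integral>\<^sup>+x. indicator s x * f x \<partial>p) / emeasure p s"
proof -
  have pos: "measure p s > 0" using assms measure_pmf_posI by (metis disjoint_iff)
  have "(\<integral>\<^sup>+x. f x \<partial>cond_pmf p s) =
        (\<integral>\<^sup>+x. ennreal (pmf p x) * (indicator s x * f x) / ennreal (measure p s) \<partial>count_space UNIV)"
    unfolding nn_integral_measure_pmf
  proof (rule nn_integral_cong)
    fix x
    show "ennreal (pmf (cond_pmf p s) x) * f x =
          ennreal (pmf p x) * (indicator s x * f x) / ennreal (measure p s)"
      using pos by (auto simp: pmf_cond[OF assms] divide_ennreal[symmetric] ennreal_times_divide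
            ennreal_divide_times mult.assoc split: split_indicator)
  qed
  also have "\<dots> = (\<integral>\<^sup>+x. indicator s x * f x \<partial>p) / emeasure p s"
    by (simp add: nn_integral_divide nn_integral_measure_pmf measure_pmf.emeasure_eq_measure)
  finally show ?thesis .
qed

lemma rearr_same:
  fixes a1 a2 b1 b2 :: real
  assumes "0 \<le> a1" "0 \<le> a2" "0 \<le> b1" "0 \<le> b2" "(a1 - a2) * (b1 - b2) \<ge> 0"
  shows "ennreal a1 * ennreal b2 + ennreal a2 * ennreal b1 \<le> ennreal a1 * ennreal b1 + ennreal a2 * ennreal b2"
proof -
  have "a1 * b2 + a2 * b1 \<le> a1 * b1 + a2 * b2" using assms(5) by (simp add: algebra_simps)
  then have "ennreal (a1 * b2 + a2 * b1) \<le> ennreal (a1 * b1 + a2 * b2)" by (rule ennreal_leI)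
  then show ?thesis using assms by (simp add: ennreal_mult)
qed

lemma rearr_opp:
  fixes a1 a2 b1 b2 :: real
  assumes "0 \<le> a1" "0 \<le> a2" "0 \<le> b1" "0 \<le> b2" "(a1 - a2) * (b1 - b2) \<le> 0"
  shows "ennreal a1 * ennreal b1 + ennreal a2 * ennreal b2 \<le> ennreal a1 * ennreal b2 + ennreal a2 * ennreal b1"
proof -
  have "a1 * b1 + a2 * b2 \<le> a1 * b2 + a2 * b1" using assms(5) by (simp add: algebra_simps)
  then have "ennreal (a1 * b1 + a2 * b2) \<le> ennreal (a1 * b2 + a2 * b1)" by (rule ennreal_leI)
  then show ?thesis using assms by (simp add: ennreal_mult)
qed




lemma u_real_antimono:
  "a \<le> b \<Longrightarrow> pmf (iterK d t b) 0 \<le> pmf (iterK d t a) 0"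
  using u_antimono[of a b d t] by (simp add: ennreal_le_iff)

lemma prod_nonneg_antimono:
  fixes f g :: "nat \<Rightarrow> real"
  assumes "\<And>a b. a \<le> b \<Longrightarrow> f b \<le> f a" "\<And>a b. a \<le> b \<Longrightarrow> g b \<le> g a"
  shows "(f x - f y) * (g x - g y) \<ge> 0"
proof (cases "x \<le> y")
  case True
  then show ?thesis using assms[OF True] by (simp add: mult_nonneg_nonneg)
next
  case False
  then have "y \<le> x" by simp
  then show ?thesis using assms[OF \<open>y \<le> x\<close>] by (simp add: mult_nonpos_nonpos)
qed

lemma prod_nonpos_mono_antimono:
  fixes f g :: "nat \<Rightarrow> real"
  assumes "\<And>a b. a \<le> b \<Longrightarrow> f a \<le> f b" "\<And>a b. a \<le> b \<Longrightarrow> g b \<le> g a"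
  shows "(f x - f y) * (g x - g y) \<le> 0"
proof (cases "x \<le> y")
  case True
  then show ?thesis using assms[OF True] by (simp add: mult_nonpos_nonneg)
next
  case False
  then have "y \<le> x" by simp
  then show ?thesis using assms[OF \<open>y \<le> x\<close>] by (simp add: mult_nonneg_nonpos)
qed

lemma inner_u:
  "(\<integral>\<^sup>+w. c * ennreal (indicator {0} w) \<partial>iterK d t z) = c * ennreal (pmf (iterK d t z) 0)"
  by (simp add: nn_integral_cmult emeasure_pmf_single ennreal_indicator)




lemma gw_pos2:
  assumes "0 \<in> set_pmf d" "1 \<le> n" "n \<le> m"
  shows "\<exists>zs\<in>set_pmf (gw_gens d m). zs ! n = 0"
  using assms(3)
proof (induction m rule: dec_induct)
  case base
  then show ?case using gw_pos[OF assms(1,2)] .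
next
  case (step m)
  then obtain zs where zs: "zs \<in> set_pmf (gw_gens d m)" "zs ! n = 0" by blast
  obtain x where x: "x \<in> set_pmf (sum_iid d (last zs))" using set_pmf_not_empty[of "sum_iid d (last zs)"] by blast
  have "zs @ [x] \<in> set_pmf (gw_gens d (Suc m))" using zs x by auto
  moreover have "(zs @ [x]) ! n = 0"
    using zs gw_length[OF zs(1)] step(1) by (simp add: nth_append)
  ultimately show ?case by blast
qed

lemma emeasure_as_int: "emeasure (measure_pmf M) A = (\<integral>\<^sup>+ x. indicator A x \<partial>M)"
  by simp

theorem lemma3:
  fixes p :: "nat \<Rightarrow> real" and q :: real
  assumes nonneg: "\<forall>k. p k \<ge> 0"
    and prob: "p sums 1"
    and p0: "p 0 > 0"
    and mean_fin: "summable (\<lambda>k. real k * p k)"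
    and supercrit: "(\<Sum>k. real k * p k) > 1"
    and q_range: "0 < q" "q < 1"
    and q_fix: "gen p q = q"
  shows "(\<forall>k n. n \<ge> 1 \<longrightarrow>
            measure_pmf.prob (cond_pmf (gw_gens (offspring_pmf p q) n) {zs. zs ! n = 0})
                {zs. zs ! 1 \<le> k}
            \<ge> measure_pmf.prob (gw_gens (offspring_pmf p q) n) {zs. zs ! 1 \<le> k})
       \<and> (\<forall>i n. n \<ge> 1 \<longrightarrow>
            (\<integral>\<^sup>+ zs. ennreal (real (zs ! i))
               \<partial>measure_pmf (cond_pmf (gw_gens (offspring_pmf p q) (max n i)) {zs. zs ! n = 0}))
            \<le> ennreal (deriv (gen p) q ^ i))"
proof -
  define d where "d = offspring_pmf p q"
  note of = offspring_facts[OF nonneg prob mean_fin q_range q_fix]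
  have pmfd: "\<And>k. pmf d k = p k * q ^ k / q" using of(1) by (simp add: d_def)
  have d0: "0 \<in> set_pmf d" using pmfd[of 0] p0 q_range by (simp add: set_pmf_iff)
  have M: "(\<integral>\<^sup>+x. ennreal (real x) \<partial>d) = ennreal (deriv (gen p) q)" using of(2) by (simp add: d_def)
  have Mnn: "deriv (gen p) q \<ge> 0" by (rule of(3))
  have eB: "emeasure (gw_gens d n) {zs. zs ! n = 0} =
            (\<integral>\<^sup>+z. ennreal (pmf (iterK d (n - i) z) 0) \<partial>mu d i)" if "i \<le> n" for i n
  proof -
    have "emeasure (gw_gens d n) {zs. zs ! n = 0} =
          (\<integral>\<^sup>+zs. 1 * ennreal (indicator {0} (zs ! n)) \<partial>gw_gens d n)"
      by (subst emeasure_as_int) (rule nn_integral_cong, auto split: split_indicator)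
    also have "\<dots> = (\<integral>\<^sup>+z. ennreal (pmf (iterK d (n - i) z) 0) \<partial>mu d i)"
      by (subst joint_integral[OF that, where F="\<lambda>a b. 1 * ennreal (indicator {0} b)"])
         (simp add: ennreal_indicator emeasure_pmf_single)
    finally show ?thesis .
  qed
  have Bpos: "emeasure (gw_gens d n) {zs. zs ! n = 0} > 0"
   and Bne: "set_pmf (gw_gens d n) \<inter> {zs. zs ! n = 0} \<noteq> {}" if n1: "1 \<le> n" for n
  proof -
    obtain zs where "zs \<in> set_pmf (gw_gens d n)" "zs ! n = 0" using gw_pos[OF d0 n1] by blast
    then show "set_pmf (gw_gens d n) \<inter> {zs. zs ! n = 0} \<noteq> {}" by blast
    show "emeasure (gw_gens d n) {zs. zs ! n = 0} > 0"
      using measure_pmf_posI[OF \<open>zs \<in> _\<close>, of "{zs. zs ! n = 0}"] \<open>zs ! n = 0\<close>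
      by (simp add: measure_pmf.emeasure_eq_measure)
  qed
  have part1: "measure_pmf.prob (cond_pmf (gw_gens d n) {zs. zs ! n = 0}) {zs. zs ! 1 \<le> k}
            \<ge> measure_pmf.prob (gw_gens d n) {zs. zs ! 1 \<le> k}" if n1: "1 \<le> n" for k n
  proof -
    let ?G = "gw_gens d n" let ?A = "{zs. zs ! 1 \<le> k}" let ?B = "{zs. zs ! n = 0}"
    let ?u = "\<lambda>z. ennreal (pmf (iterK d (n - 1) z) 0)"
    let ?f = "\<lambda>z. ennreal (indicator {..k} z)"
    have eN: "emeasure ?G (?A \<inter> ?B) = (\<integral>\<^sup>+z. ?f z * ?u z \<partial>mu d 1)"
    proof -
      have "emeasure ?G (?A \<inter> ?B) =
          (\<integral>\<^sup>+zs. ?f (zs ! 1) * ennreal (indicator {0} (zs ! n)) \<partial>?G)"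
        by (subst emeasure_as_int) (rule nn_integral_cong, auto split: split_indicator)
      also have "\<dots> = (\<integral>\<^sup>+z. ?f z * ?u z \<partial>mu d 1)"
        by (subst joint_integral[OF n1, where F="\<lambda>a b. ?f a * ennreal (indicator {0} b)"])
           (simp only: inner_u)
      finally show ?thesis .
    qed
    have eA: "emeasure ?G ?A = (\<integral>\<^sup>+z. ?f z \<partial>mu d 1)"
    proof -
      have "emeasure ?G ?A = (\<integral>\<^sup>+zs. (\<lambda>a b. ?f a) (zs ! 1) (zs ! n) \<partial>?G)"
        by (subst emeasure_as_int) (rule nn_integral_cong, auto split: split_indicator)
      also have "\<dots> = (\<integral>\<^sup>+z. ?f z \<partial>mu d 1)"
        by (subst joint_integral[OF n1]) (simp add: measure_pmf.emeasure_space_1)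
      finally show ?thesis .
    qed
    have cheb: "emeasure ?G ?A * emeasure ?G ?B \<le> emeasure ?G (?A \<inter> ?B)"
      unfolding eA eN eB[OF n1]
    proof (rule cheb_same)
      fix x y
      show "?f x * ?u y + ?f y * ?u x \<le> ?f x * ?u x + ?f y * ?u y"
      proof (rule rearr_same)
        have fa: "\<And>a b. a \<le> b \<Longrightarrow> indicator {..k} b \<le> (indicator {..k} a :: real)"
          by (auto split: split_indicator)
        show "0 \<le> (indicator {..k} x - indicator {..k} y) * (pmf (iterK d (n - 1) x) 0 - pmf (iterK d (n - 1) y) 0)"
          by (rule prod_nonneg_antimono[where f="\<lambda>z. indicator {..k} z"
                 and g="\<lambda>z. pmf (iterK d (n - 1) z) 0", OF fa u_real_antimono])
      qed simp_all
    qed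
    have ne: "set_pmf ?G \<inter> ?B \<noteq> {}" by (rule Bne[OF n1])
    have PB: "measure ?G ?B > 0" using Bpos[OF n1] by (simp add: measure_pmf.emeasure_eq_measure)
    have "emeasure (cond_pmf ?G ?B) ?A = (\<integral>\<^sup>+zs. indicator ?A zs \<partial>cond_pmf ?G ?B)" by (rule emeasure_as_int)
    also have "\<dots> = emeasure ?G (?A \<inter> ?B) / emeasure ?G ?B"
    proof -
      have h: "(\<integral>\<^sup>+zs. indicator ?B zs * indicator ?A zs \<partial>?G) = emeasure ?G (?A \<inter> ?B)"
        by (subst emeasure_as_int) (rule nn_integral_cong, auto split: split_indicator)
      show ?thesis by (simp only: nn_integral_cond_pmf[OF ne] h)
    qed
    finally have e1: "emeasure (cond_pmf ?G ?B) ?A = emeasure ?G (?A \<inter> ?B) / emeasure ?G ?B" .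
    have "ennreal (measure (cond_pmf ?G ?B) ?A) = ennreal (measure ?G (?A \<inter> ?B)) / ennreal (measure ?G ?B)"
      using e1 unfolding measure_pmf.emeasure_eq_measure .
    also have "\<dots> = ennreal (measure ?G (?A \<inter> ?B) / measure ?G ?B)"
      by (rule divide_ennreal[OF measure_nonneg PB])
    finally have c: "measure (cond_pmf ?G ?B) ?A = measure ?G (?A \<inter> ?B) / measure ?G ?B"
      using ennreal_inj[OF measure_nonneg divide_nonneg_nonneg[OF measure_nonneg measure_nonneg]] by blast
    have "ennreal (measure ?G ?A * measure ?G ?B) \<le> ennreal (measure ?G (?A \<inter> ?B))"
      using cheb unfolding measure_pmf.emeasure_eq_measure ennreal_mult[OF measure_nonneg measure_nonneg] .
    hence "measure ?G ?A * measure ?G ?B \<le> measure ?G (?A \<inter> ?B)"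
      using ennreal_le_iff[OF measure_nonneg] by blast
    then show ?thesis unfolding c using PB by (simp add: pos_le_divide_eq)
  qed
  have part2: "(\<integral>\<^sup>+ zs. ennreal (real (zs ! i))
               \<partial>measure_pmf (cond_pmf (gw_gens d (max n i)) {zs. zs ! n = 0}))
            \<le> ennreal (deriv (gen p) q ^ i)" if n1: "1 \<le> n" for i n
  proof (cases "i \<le> n")
    case True
    let ?G = "gw_gens d n" let ?B = "{zs. zs ! n = 0}"
    let ?u = "\<lambda>z. ennreal (pmf (iterK d (n - i) z) 0)"
    have mx: "max n i = n" using True by simp
    have num: "(\<integral>\<^sup>+zs. indicator ?B zs * ennreal (real (zs ! i)) \<partial>?G) =
          (\<integral>\<^sup>+z. ennreal (real z) * ?u z \<partial>mu d i)"
    proof -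
      have "(\<integral>\<^sup>+zs. indicator ?B zs * ennreal (real (zs ! i)) \<partial>?G) =
          (\<integral>\<^sup>+zs. ennreal (real (zs ! i)) * ennreal (indicator {0} (zs ! n)) \<partial>?G)"
        by (auto intro!: nn_integral_cong split: split_indicator)
      also have "\<dots> = (\<integral>\<^sup>+z. ennreal (real z) * ?u z \<partial>mu d i)"
        by (subst joint_integral[OF True, where F="\<lambda>a b. ennreal (real a) * ennreal (indicator {0} b)"])
           (simp only: inner_u)
      finally show ?thesis .
    qed
    have "(\<integral>\<^sup>+z. ennreal (real z) * ?u z \<partial>mu d i) \<le>
          (\<integral>\<^sup>+z. ennreal (real z) \<partial>mu d i) * (\<integral>\<^sup>+z. ?u z \<partial>mu d i)"
    proof (rule cheb_opp)
      fix x y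
      show "ennreal (real x) * ?u x + ennreal (real y) * ?u y \<le> ennreal (real x) * ?u y + ennreal (real y) * ?u x"
      proof (rule rearr_opp)
        show "(real x - real y) * (pmf (iterK d (n - i) x) 0 - pmf (iterK d (n - i) y) 0) \<le> 0"
          by (rule prod_nonpos_mono_antimono[where f="\<lambda>z. real z"
                 and g="\<lambda>z. pmf (iterK d (n - i) z) 0", OF _ u_real_antimono]) simp
      qed simp_all
    qed
    also have "\<dots> = ennreal (deriv (gen p) q ^ i) * emeasure ?G ?B"
      by (simp add: mu_mean M eB[OF True] ennreal_power Mnn)
    finally have le: "(\<integral>\<^sup>+zs. indicator ?B zs * ennreal (real (zs ! i)) \<partial>?G) \<le>
                      emeasure ?G ?B * ennreal (deriv (gen p) q ^ i)"
      unfolding num by (simp add: mult.commute)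
    show ?thesis unfolding mx nn_integral_cond_pmf[OF Bne[OF n1]]
      by (rule divide_le_posI_ennreal[OF Bpos[OF n1] le])
  next
    case False
    then have ni: "n \<le> i" and mx: "max n i = i" by auto
    let ?G = "gw_gens d i" let ?B = "{zs. zs ! n = 0}"
    have ne: "set_pmf ?G \<inter> ?B \<noteq> {}"
      using gw_pos2[OF d0 n1 ni] by blast
    have "(\<integral>\<^sup>+zs. indicator ?B zs * ennreal (real (zs ! i)) \<partial>?G) =
          (\<integral>\<^sup>+zs. ennreal (indicator {0} (zs ! n)) * ennreal (real (zs ! i)) \<partial>?G)"
      by (auto intro!: nn_integral_cong split: split_indicator)
    also have "\<dots> = (\<integral>\<^sup>+z. (\<integral>\<^sup>+w. ennreal (indicator {0} z) * ennreal (real w) \<partial>iterK d (i - n) z) \<partial>mu d n)"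
      by (rule joint_integral[OF ni])
    also have "\<dots> = 0"
    proof (rule nn_integral_zero', rule AE_I2)
      fix z
      show "(\<integral>\<^sup>+w. ennreal (indicator {0} z) * ennreal (real w) \<partial>iterK d (i - n) z) = 0"
      proof (cases "z = 0")
        case True
        then show ?thesis by (simp add: iterK_0)
      qed simp
    qed
    finally show ?thesis unfolding mx nn_integral_cond_pmf[OF ne] by simp
  qed
  show ?thesis unfolding d_def[symmetric]
    by (intro conjI allI impI) (erule part1, erule part2)
qed


end
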